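(* Let $\alpha\in[0,1]$ and set $\sigma=25\alpha+10$, $r=28-35\alpha$, $b=\frac{\alpha+8}{3}$, $\gamma=29\alpha-1$, $x_r=\sqrt{(8+\alpha)(9-2\alpha)}$, and $E_+=(x_r,x_r,x_r^2/b)=\big(\sqrt{(8+\alpha)(9-2\alpha)},\sqrt{(8+\alpha)(9-2\alpha)},27-6\alpha\big)$. Consider the controlled system $$\begin{aligned}\dot x(t)&=\sigma\,(y(t)-x(t)),\\ \dot y(t)&=r\,[x(t)-x(t-\tau)]-[x(t)z(t)-x(t-\tau)z(t-\tau)]+\gamma\,[y(t)-y(t-\tau)]-\sigma\,[y(t-\tau)-x_r],\\ \dot z(t)&=x(t)y(t)-b\,z(t),\end{aligned}$$ with delay $\tau=0$; that is, the ODE system $\dot x=\sigma(y-x)$, $\dot y=-\sigma(y-x_r)$, $\dot z=xy-bz$. Then, for every $\alpha\in[0,1]$, $E_+$ is a globally asymptotically stable equilibrium of this system.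
   Context: The system above is the generalized Lorenz system $\dot x=\sigma(y-x)$, $\dot y=rx-xz+\gamma y$, $\dot z=xy-bz$ to which the delayed feedback control $u=-rx(t-\tau)+x(t-\tau)z(t-\tau)-\gamma y(t-\tau)-\sigma[y(t-\tau)-x_r]$ has been added in the $y$-equation; $E_+$ is a nontrivial equilibrium of the uncontrolled system and an equilibrium of the controlled one. *)

theory Defs
  imports "HOL-Analysis.Analysis"
begin

definition sig :: "real \<Rightarrow> real" where "sig \<alpha> = 25 * \<alpha> + 10"
definition rr :: "real \<Rightarrow> real" where "rr \<alpha> = 28 - 35 * \<alpha>"
definition bb :: "real \<Rightarrow> real" where "bb \<alpha> = (\<alpha> + 8) / 3"
definition gam :: "real \<Rightarrow> real" where "gam \<alpha> = 29 * \<alpha> - 1"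
definition xr :: "real \<Rightarrow> real" where "xr \<alpha> = sqrt ((8 + \<alpha>) * (9 - 2 * \<alpha>))"

definition E_plus :: "real \<Rightarrow> real \<times> real \<times> real" where
  "E_plus \<alpha> = (xr \<alpha>, xr \<alpha>, (xr \<alpha>)^2 / bb \<alpha>)"

text \<open>Right-hand side of the controlled system with delay tau = 0, i.e. with
  x(t - tau) = x(t) etc. substituted into the delayed equations.\<close>
definition ctrl_field :: "real \<Rightarrow> real \<times> real \<times> real \<Rightarrow> real \<times> real \<times> real" where
  "ctrl_field \<alpha> = (\<lambda>(x, y, z).
      (sig \<alpha> * (y - x),
       rr \<alpha> * (x - x) - (x * z - x * z) + gam \<alpha> * (y - y) - sig \<alpha> * (y - xr \<alpha>),
       x * y - bb \<alpha> * z))"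

definition is_solution :: "('a::real_normed_vector \<Rightarrow> 'a) \<Rightarrow> (real \<Rightarrow> 'a) \<Rightarrow> bool" where
  "is_solution f \<phi> \<longleftrightarrow> (\<forall>t\<ge>0. (\<phi> has_vector_derivative f (\<phi> t)) (at t within {0..}))"

definition equilibrium :: "('a::real_normed_vector \<Rightarrow> 'a) \<Rightarrow> 'a \<Rightarrow> bool" where
  "equilibrium f e \<longleftrightarrow> f e = 0"

definition lyapunov_stable :: "('a::real_normed_vector \<Rightarrow> 'a) \<Rightarrow> 'a \<Rightarrow> bool" where
  "lyapunov_stable f e \<longleftrightarrow>
     (\<forall>\<epsilon>>0. \<exists>\<delta>>0. \<forall>\<phi>. is_solution f \<phi> \<and> dist (\<phi> 0) e < \<delta> \<longrightarrow> (\<forall>t\<ge>0. dist (\<phi> t) e < \<epsilon>))"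

definition globally_attractive :: "('a::real_normed_vector \<Rightarrow> 'a) \<Rightarrow> 'a \<Rightarrow> bool" where
  "globally_attractive f e \<longleftrightarrow> (\<forall>\<phi>. is_solution f \<phi> \<longrightarrow> (\<phi> \<longlongrightarrow> e) at_top)"

definition globally_asymptotically_stable :: "('a::real_normed_vector \<Rightarrow> 'a) \<Rightarrow> 'a \<Rightarrow> bool" where
  "globally_asymptotically_stable f e \<longleftrightarrow>
     equilibrium f e \<and> lyapunov_stable f e \<and> globally_attractive f e"

end

theory Submission
  imports Defs "HOL-Real_Asymp.Real_Asymp"
begin

lemma vd_fst: "(f has_vector_derivative D) F \<Longrightarrow> ((\<lambda>x. fst (f x)) has_vector_derivative fst D) F"
  unfolding has_vector_derivative_def by (drule has_derivative_fst) simp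

lemma vd_snd: "(f has_vector_derivative D) F \<Longrightarrow> ((\<lambda>x. snd (f x)) has_vector_derivative snd D) F"
  unfolding has_vector_derivative_def by (drule has_derivative_snd) simp

lemma dist3_le:
  fixes a b c a' b' c' :: real
  shows "dist (a,b,c) (a',b',c') \<le> \<bar>a-a'\<bar> + \<bar>b-b'\<bar> + \<bar>c-c'\<bar>"
proof -
  have "dist (b,c) (b',c') \<le> \<bar>b-b'\<bar> + \<bar>c-c'\<bar>"
    unfolding dist_Pair_Pair dist_real_def by (rule sqrt_sum_squares_le_sum) auto
  moreover have "dist (a,b,c) (a',b',c') \<le> \<bar>a-a'\<bar> + dist (b,c) (b',c')"
    unfolding dist_Pair_Pair[of a] dist_real_def by (rule sqrt_sum_squares_le_sum) auto
  ultimately show ?thesis by linarith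
qed

lemma bound_lemma:
  fixes f f' B H :: "real \<Rightarrow> real"
  assumes df: "\<And>t. t \<ge> 0 \<Longrightarrow> (f has_real_derivative f' t) (at t within {0..})"
    and dH: "\<And>t. t \<ge> 0 \<Longrightarrow> (H has_real_derivative B t) (at t within {0..})"
    and bd: "\<And>t. t \<ge> 0 \<Longrightarrow> \<bar>f' t\<bar> \<le> B t"
    and t: "t \<ge> 0"
  shows "\<bar>f t - f 0\<bar> \<le> H t - H 0"
proof -
  have cf: "continuous_on {0..t} f"
    by (rule continuous_on_subset[OF DERIV_continuous_on[of "{0..}" f f']]) (use df in auto)
  have cH: "continuous_on {0..t} H"
    by (rule continuous_on_subset[OF DERIV_continuous_on[of "{0..}" H B]]) (use dH in auto)
  have at: "at x within {0..} = at x" if "0 < x" for x :: real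
    by (rule at_within_interior) (use that in simp)
  have "(\<lambda>x. H x - f x) 0 \<le> (\<lambda>x. H x - f x) t"
  proof (rule DERIV_nonneg_imp_increasing_open[OF t])
    fix x :: real assume x: "0 < x" "x < t"
    show "\<exists>y. ((\<lambda>x. H x - f x) has_real_derivative y) (at x) \<and> 0 \<le> y"
      using DERIV_diff[OF dH[of x] df[of x]] bd[of x] x at[of x] by auto
  qed (intro continuous_intros cf cH)
  moreover have "(\<lambda>x. H x + f x) 0 \<le> (\<lambda>x. H x + f x) t"
  proof (rule DERIV_nonneg_imp_increasing_open[OF t])
    fix x :: real assume x: "0 < x" "x < t"
    show "\<exists>y. ((\<lambda>x. H x + f x) has_real_derivative y) (at x) \<and> 0 \<le> y"
      using DERIV_add[OF dH[of x] df[of x]] bd[of x] x at[of x] by auto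
  qed (intro continuous_intros cf cH)
  ultimately show ?thesis by auto
qed

lemma exp_half_bound:
  fixes y :: real assumes "y \<ge> 0"
  shows "y * exp (-y) \<le> exp (-(y/2))"
proof -
  have e: "exp (y/2) = exp (y/4) ^ 2"
    by (simp add: exp_double[symmetric] power2_eq_square exp_add[symmetric])
  have "1 + y/4 \<le> exp (y/4)" by (rule exp_ge_add_one_self)
  hence "(1 + y/4)^2 \<le> exp (y/4) ^ 2" using assms by (intro power_mono) auto
  moreover have "y \<le> (1 + y/4)^2"
  proof -
    have sq: "0 \<le> (y-4)*(y-4)" by simp
    have e1: "(y-4)*(y-4) = y*y - 8*y + 16" by algebra
    have e2: "(1 + y/4)^2 = 1 + y/2 + y*y/16" by (simp add: power2_eq_square algebra_simps)
    show ?thesis using sq e1 e2 by linarith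
  qed
  ultimately have "y \<le> exp (y/2)" using e by linarith
  hence "y * exp (-y) \<le> exp (y/2) * exp (-y)" by (intro mult_right_mono) auto
  also have "\<dots> = exp (-(y/2))" by (simp add: exp_add[symmetric])
  finally show ?thesis .
qed

lemma tend_exp0:
  fixes c :: real assumes "c > 0"
  shows "((\<lambda>t. exp (-(c*t))) \<longlongrightarrow> 0) at_top"
  using assms by real_asymp

lemma sys_bounds:
  fixes x y z :: "real \<Rightarrow> real" and s b X :: real
  assumes dx: "\<And>t. t \<ge> 0 \<Longrightarrow> (x has_real_derivative s*(y t - x t)) (at t within {0..})"
    and dy: "\<And>t. t \<ge> 0 \<Longrightarrow> (y has_real_derivative -s*(y t - X)) (at t within {0..})"
    and dz: "\<And>t. t \<ge> 0 \<Longrightarrow> (z has_real_derivative x t * y t - b * z t) (at t within {0..})"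
    and s: "s > 0" and b: "b > 0" and sb: "s/2 - b \<ge> 2" and X: "X \<ge> 0"
    and t: "t \<ge> 0"
  shows "\<bar>y t - X\<bar> \<le> \<bar>y 0 - X\<bar> * exp (-(s*t))"
    "\<bar>x t - X\<bar> \<le> (\<bar>x 0 - X\<bar> + \<bar>y 0 - X\<bar>) * exp (-(s/2*t))"
    "\<bar>z t - X^2/b\<bar> \<le> (\<bar>z 0 - X^2/b\<bar> + (2*X*(\<bar>x 0 - X\<bar> + \<bar>y 0 - X\<bar>)
        + (\<bar>x 0 - X\<bar> + \<bar>y 0 - X\<bar>)^2)/2) * exp (-(b*t))"
proof -
  define m where "m = \<bar>x 0 - X\<bar> + \<bar>y 0 - X\<bar>"
  have m0: "m \<ge> 0" unfolding m_def by simp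
  have expinv: "exp a * exp (-a) = 1" for a :: real by (simp add: exp_minus)
  have V: "(y t' - X) * exp (s*t') = y 0 - X" if t': "t' \<ge> 0" for t'
  proof -
    have "\<bar>(\<lambda>t. (y t - X) * exp (s*t)) t' - (\<lambda>t. (y t - X) * exp (s*t)) 0\<bar>
        \<le> (\<lambda>_. 0) t' - (\<lambda>_. 0::real) 0"
    proof (rule bound_lemma[where f'="\<lambda>_. 0" and B="\<lambda>_. 0"])
      fix t :: real assume "t \<ge> 0"
      show "((\<lambda>t. (y t - X) * exp (s*t)) has_real_derivative 0) (at t within {0..})"
        by (rule DERIV_cong, (rule derivative_eq_intros dy[OF \<open>t\<ge>0\<close>] refl)+) (simp add: algebra_simps)
    qed (use t' in auto)
    thus ?thesis by simp
  qed
  have vt: "y t' - X = (y 0 - X) * exp (-(s*t'))" if "t' \<ge> 0" for t'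
  proof -
    have "y t' - X = (y t' - X) * exp (s*t') * exp (-(s*t'))"
      using expinv[of "s*t'"] by (simp add: mult.assoc)
    thus ?thesis using V[OF that] by simp
  qed
  show v: "\<bar>y t - X\<bar> \<le> \<bar>y 0 - X\<bar> * exp (-(s*t))"
    using vt[OF t] by (simp add: abs_mult)
  have e1: "exp (-(s*t')) \<le> exp (-(s/2*t'))" if "t' \<ge> 0" for t'
    using that s by (simp add: mult_nonneg_nonneg)
  have ut: "\<bar>x t' - X\<bar> \<le> m * exp (-(s/2*t'))" if t': "t' \<ge> 0" for t'
  proof -
    have "\<bar>(\<lambda>t. (x t - X) * exp (s*t)) t' - (\<lambda>t. (x t - X) * exp (s*t)) 0\<bar>
        \<le> (\<lambda>t. s*\<bar>y 0 - X\<bar>*t) t' - (\<lambda>t. s*\<bar>y 0 - X\<bar>*t) 0"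
    proof (rule bound_lemma[where f'="\<lambda>_. s*(y 0 - X)" and B="\<lambda>_. s*\<bar>y 0 - X\<bar>"])
      fix t :: real assume t0: "t \<ge> 0"
      have D: "((\<lambda>t. (x t - X) * exp (s*t)) has_real_derivative s*((y t - X)*exp (s*t))) (at t within {0..})"
        by (rule DERIV_cong, (rule derivative_eq_intros dx[OF t0] refl)+) (simp add: algebra_simps)
      show "((\<lambda>t. (x t - X) * exp (s*t)) has_real_derivative s*(y 0 - X)) (at t within {0..})"
        using D V[OF t0] by simp
      show "((\<lambda>t. s*\<bar>y 0 - X\<bar>*t) has_real_derivative s*\<bar>y 0 - X\<bar>) (at t within {0..})"
        by (rule DERIV_cong, (rule derivative_eq_intros refl)+) simp
      show "\<bar>s*(y 0 - X)\<bar> \<le> s*\<bar>y 0 - X\<bar>" using s by (simp add: abs_mult)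
    qed (use t' in auto)
    hence U: "\<bar>(x t' - X) * exp (s*t')\<bar> \<le> \<bar>x 0 - X\<bar> + \<bar>y 0 - X\<bar> * (s*t')"
      by (simp add: algebra_simps)
    have "x t' - X = (x t' - X) * exp (s*t') * exp (-(s*t'))"
      using expinv[of "s*t'"] by (simp add: mult.assoc)
    hence "\<bar>x t' - X\<bar> = \<bar>(x t' - X) * exp (s*t')\<bar> * exp (-(s*t'))"
      by (metis abs_exp_cancel abs_mult)
    also have "\<dots> \<le> (\<bar>x 0 - X\<bar> + \<bar>y 0 - X\<bar> * (s*t')) * exp (-(s*t'))"
      by (rule mult_right_mono[OF U]) simp
    also have "\<dots> = \<bar>x 0 - X\<bar> * exp (-(s*t')) + \<bar>y 0 - X\<bar> * ((s*t') * exp (-(s*t')))"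
      by (simp add: algebra_simps)
    also have "\<dots> \<le> \<bar>x 0 - X\<bar> * exp (-(s/2*t')) + \<bar>y 0 - X\<bar> * exp (-(s/2*t'))"
    proof (intro add_mono mult_left_mono)
      show "exp (-(s*t')) \<le> exp (-(s/2*t'))" by (rule e1[OF t'])
      have "(s*t') * exp (-(s*t')) \<le> exp (-((s*t')/2))"
        by (rule exp_half_bound) (use s t' in simp)
      thus "(s*t') * exp (-(s*t')) \<le> exp (-(s/2*t'))" by simp
    qed auto
    finally show ?thesis unfolding m_def by (simp add: algebra_simps)
  qed
  show "\<bar>x t - X\<bar> \<le> (\<bar>x 0 - X\<bar> + \<bar>y 0 - X\<bar>) * exp (-(s/2*t))"
    using ut[OF t] unfolding m_def .
  define K where "K = 2*X*m + m^2"
  define c where "c = s/2 - b"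
  have c2: "c \<ge> 2" using sb c_def by simp
  have K0: "K \<ge> 0" unfolding K_def using X m0 by simp
  have "\<bar>(\<lambda>t. (z t - X^2/b) * exp (b*t)) t - (\<lambda>t. (z t - X^2/b) * exp (b*t)) 0\<bar>
      \<le> (\<lambda>t. -(K/c)*exp (-(c*t))) t - (\<lambda>t. -(K/c)*exp (-(c*t))) 0"
  proof (rule bound_lemma[where f'="\<lambda>t. ((x t - X)*X + (y t - X)*X + (x t - X)*(y t - X)) * exp (b*t)"
        and B="\<lambda>t. K * exp (-(c*t))"])
    fix t :: real assume t0: "t \<ge> 0"
    show "((\<lambda>t. (z t - X^2/b) * exp (b*t)) has_real_derivative
        ((x t - X)*X + (y t - X)*X + (x t - X)*(y t - X)) * exp (b*t)) (at t within {0..})"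
    proof -
      have D: "((\<lambda>t. (z t - X^2/b) * exp (b*t)) has_real_derivative
        (x t * y t - b * z t + (z t - X^2/b) * b) * exp (b*t)) (at t within {0..})"
        by (rule DERIV_cong, (rule derivative_eq_intros dz[OF t0] refl)+) (simp add: algebra_simps)
      have "(z t - X^2/b) * b = b * z t - X^2" using b by (simp add: field_simps)
      hence "x t * y t - b * z t + (z t - X^2/b) * b = (x t - X)*X + (y t - X)*X + (x t - X)*(y t - X)"
        by (simp add: algebra_simps power2_eq_square)
      thus ?thesis using D by simp
    qed
    show "((\<lambda>t. -(K/c)*exp (-(c*t))) has_real_derivative K * exp (-(c*t))) (at t within {0..})"
      by (rule DERIV_cong, (rule derivative_eq_intros refl)+) (use c2 in simp)
    define e where "e = exp (-(s/2*t))"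
    have e0: "e \<ge> 0" "e \<le> 1" unfolding e_def using s t0 by (auto simp: mult_nonneg_nonneg)
    have uu: "\<bar>x t - X\<bar> \<le> m * e" using ut[OF t0] e_def by simp
    have vv: "\<bar>y t - X\<bar> \<le> m * e"
    proof -
      have "\<bar>y t - X\<bar> \<le> \<bar>y 0 - X\<bar> * exp (-(s/2*t))"
        using vt[OF t0] e1[OF t0] by (simp add: abs_mult mult_left_mono)
      also have "\<dots> \<le> m * exp (-(s/2*t))" unfolding m_def by (intro mult_right_mono) auto
      finally show ?thesis unfolding e_def .
    qed
    have g: "\<bar>(x t - X)*X + (y t - X)*X + (x t - X)*(y t - X)\<bar> \<le> K * e"
    proof -
      have "\<bar>(x t - X)*X + (y t - X)*X + (x t - X)*(y t - X)\<bar>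
          \<le> \<bar>x t - X\<bar>*X + \<bar>y t - X\<bar>*X + \<bar>x t - X\<bar>*\<bar>y t - X\<bar>"
      proof -
        have "\<bar>(x t - X)*X + (y t - X)*X + (x t - X)*(y t - X)\<bar>
          \<le> \<bar>(x t - X)*X\<bar> + \<bar>(y t - X)*X\<bar> + \<bar>(x t - X)*(y t - X)\<bar>"
          by (smt (verit) abs_triangle_ineq)
        thus ?thesis using X by (simp add: abs_mult)
      qed
      also have "\<dots> \<le> (m*e)*X + (m*e)*X + (m*e)*(m*e)"
        using uu vv X by (intro add_mono mult_mono mult_right_mono) auto
      also have "\<dots> \<le> (m*e)*X + (m*e)*X + (m*m)*e"
      proof -
        have "(m*e)*(m*e) = (m*m)*(e*e)" by simp
        also have "\<dots> \<le> (m*m)*e" using e0 m0 by (intro mult_left_mono) (auto simp: mult_left_le_one_le)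
        finally show ?thesis by simp
      qed
      also have "\<dots> = K * e" unfolding K_def by (simp add: algebra_simps power2_eq_square)
      finally show ?thesis .
    qed
    have ee: "e * exp (b*t) = exp (-(c*t))" unfolding e_def c_def
      by (simp add: exp_add[symmetric] algebra_simps)
    have "\<bar>((x t - X)*X + (y t - X)*X + (x t - X)*(y t - X)) * exp (b*t)\<bar>
        \<le> (K*e) * exp (b*t)" by (simp add: abs_mult mult_right_mono[OF g])
    thus "\<bar>((x t - X)*X + (y t - X)*X + (x t - X)*(y t - X)) * exp (b*t)\<bar> \<le> K * exp (-(c*t))"
      using ee by (simp add: mult.assoc)
  qed (use t in auto)
  hence W: "\<bar>(z t - X^2/b) * exp (b*t) - (z 0 - X^2/b)\<bar> \<le> K/c * (1 - exp (-(c*t)))"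
    by (simp add: algebra_simps)
  have "K/c * (1 - exp (-(c*t))) \<le> K/c * 1"
    using K0 c2 by (intro mult_left_mono) auto
  also have "K/c \<le> K/2" by (rule divide_left_mono) (use K0 c2 in auto)
  finally have W2: "\<bar>(z t - X^2/b) * exp (b*t)\<bar> \<le> \<bar>z 0 - X^2/b\<bar> + K/2" using W by linarith
  have "z t - X^2/b = (z t - X^2/b) * exp (b*t) * exp (-(b*t))"
    using expinv[of "b*t"] by (simp add: mult.assoc)
  hence "\<bar>z t - X^2/b\<bar> = \<bar>(z t - X^2/b) * exp (b*t)\<bar> * exp (-(b*t))"
    by (metis abs_exp_cancel abs_mult)
  also have "\<dots> \<le> (\<bar>z 0 - X^2/b\<bar> + K/2) * exp (-(b*t))"
    by (rule mult_right_mono[OF W2]) simp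
  finally show "\<bar>z t - X^2/b\<bar> \<le> (\<bar>z 0 - X^2/b\<bar> + (2*X*(\<bar>x 0 - X\<bar> + \<bar>y 0 - X\<bar>)
        + (\<bar>x 0 - X\<bar> + \<bar>y 0 - X\<bar>)^2)/2) * exp (-(b*t))"
    unfolding K_def m_def .
qed

lemma sol_bounds:
  fixes \<alpha> :: real and \<phi> :: "real \<Rightarrow> real \<times> real \<times> real" and X s b m :: real
  assumes a0: "0 \<le> \<alpha>" and a1: "\<alpha> \<le> 1"
    and sol: "is_solution (ctrl_field \<alpha>) \<phi>" and t: "t \<ge> 0"
    and X_def: "X = xr \<alpha>" and s_def: "s = sig \<alpha>" and b_def: "b = bb \<alpha>"
    and m_def: "m = \<bar>fst (\<phi> 0) - X\<bar> + \<bar>fst (snd (\<phi> 0)) - X\<bar>"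
  shows "\<bar>fst (snd (\<phi> t)) - X\<bar> \<le> \<bar>fst (snd (\<phi> 0)) - X\<bar> * exp (-(s*t))"
    "\<bar>fst (\<phi> t) - X\<bar> \<le> m * exp (-(s/2*t))"
    "\<bar>snd (snd (\<phi> t)) - X^2/b\<bar> \<le> (\<bar>snd (snd (\<phi> 0)) - X^2/b\<bar> + (2*X*m + m^2)/2) * exp (-(b*t))"
    "s > 0" "b > 0" "X \<ge> 0"
proof -
  define x where "x t = fst (\<phi> t)" for t
  define y where "y t = fst (snd (\<phi> t))" for t
  define z where "z t = snd (snd (\<phi> t))" for t
  have ph: "\<phi> t = (x t, y t, z t)" for t unfolding x_def y_def z_def by simp
  have cf: "ctrl_field \<alpha> (\<phi> t) = (s*(y t - x t), -s*(y t - X), x t * y t - b * z t)" for t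
    unfolding ph ctrl_field_def s_def X_def b_def by (simp add: algebra_simps)
  have D: "(\<phi> has_vector_derivative ctrl_field \<alpha> (\<phi> t)) (at t within {0..})" if "t \<ge> 0" for t
    using sol that unfolding is_solution_def by auto
  have dx: "(x has_real_derivative s*(y t - x t)) (at t within {0..})" if "t \<ge> 0" for t
    using vd_fst[OF D[OF that]] unfolding has_real_derivative_iff_has_vector_derivative cf x_def[abs_def]
    by (simp add: x_def y_def)
  have dy: "(y has_real_derivative -s*(y t - X)) (at t within {0..})" if "t \<ge> 0" for t
    using vd_fst[OF vd_snd[OF D[OF that]]] unfolding has_real_derivative_iff_has_vector_derivative cf y_def[abs_def]
    by (simp add: y_def)
  have dz: "(z has_real_derivative x t * y t - b * z t) (at t within {0..})" if "t \<ge> 0" for t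
    using vd_snd[OF vd_snd[OF D[OF that]]] unfolding has_real_derivative_iff_has_vector_derivative cf z_def[abs_def]
    by (simp add: x_def y_def z_def)
  show s: "s > 0" unfolding s_def sig_def using a0 by simp
  show b: "b > 0" unfolding b_def bb_def using a0 by simp
  show X: "X \<ge> 0" unfolding X_def xr_def using a0 a1 by (intro real_sqrt_ge_zero mult_nonneg_nonneg) auto
  have sb: "s/2 - b \<ge> 2" unfolding s_def b_def sig_def bb_def using a0 by (simp add: field_simps)
  note B = sys_bounds[OF dx dy dz s b sb X t]
  show "\<bar>fst (snd (\<phi> t)) - X\<bar> \<le> \<bar>fst (snd (\<phi> 0)) - X\<bar> * exp (-(s*t))"
    using B(1) unfolding y_def .
  show "\<bar>fst (\<phi> t) - X\<bar> \<le> m * exp (-(s/2*t))"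
    using B(2) unfolding x_def y_def m_def .
  show "\<bar>snd (snd (\<phi> t)) - X^2/b\<bar> \<le> (\<bar>snd (snd (\<phi> 0)) - X^2/b\<bar> + (2*X*m + m^2)/2) * exp (-(b*t))"
    using B(3) unfolding x_def y_def z_def m_def .
qed

theorem theorem1:
  fixes \<alpha> :: real
  assumes "0 \<le> \<alpha>" and "\<alpha> \<le> 1"
  shows "globally_asymptotically_stable (ctrl_field \<alpha>) (E_plus \<alpha>)"
proof -
  define X where "X = xr \<alpha>"
  define s where "s = sig \<alpha>"
  define b where "b = bb \<alpha>"
  have b0: "b > 0" unfolding b_def bb_def using assms by simp
  have s0: "s > 0" unfolding s_def sig_def using assms by simp
  have X0: "X \<ge> 0" unfolding X_def xr_def using assms by (intro real_sqrt_ge_zero mult_nonneg_nonneg) auto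
  have E: "E_plus \<alpha> = (X, X, X^2/b)" unfolding E_plus_def X_def b_def by simp
  have eq: "equilibrium (ctrl_field \<alpha>) (E_plus \<alpha>)"
    unfolding equilibrium_def E ctrl_field_def using b0 by (simp add: b_def X_def zero_prod_def power2_eq_square)
  have distle: "dist (\<phi> t) (E_plus \<alpha>) \<le> \<bar>fst (\<phi> t) - X\<bar> + \<bar>fst (snd (\<phi> t)) - X\<bar> + \<bar>snd (snd (\<phi> t)) - X^2/b\<bar>"
    for \<phi> :: "real \<Rightarrow> real \<times> real \<times> real" and t
  proof -
    have "\<phi> t = (fst (\<phi> t), fst (snd (\<phi> t)), snd (snd (\<phi> t)))" by simp
    then show ?thesis unfolding E by (metis dist3_le)
  qed
  have d1: "\<bar>fst p - X\<bar> \<le> dist p (E_plus \<alpha>)" for p :: "real \<times> real \<times> real"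
    using dist_fst_le[of p "E_plus \<alpha>"] unfolding E by (simp add: dist_real_def)
  have d2: "\<bar>fst (snd p) - X\<bar> \<le> dist p (E_plus \<alpha>)" for p :: "real \<times> real \<times> real"
    using dist_fst_le[of "snd p" "snd (E_plus \<alpha>)"] dist_snd_le[of p "E_plus \<alpha>"] unfolding E
    by (simp add: dist_real_def)
  have d3: "\<bar>snd (snd p) - X^2/b\<bar> \<le> dist p (E_plus \<alpha>)" for p :: "real \<times> real \<times> real"
    using dist_snd_le[of "snd p" "snd (E_plus \<alpha>)"] dist_snd_le[of p "E_plus \<alpha>"] unfolding E
    by (simp add: dist_real_def)
  have expl1: "exp (-(k*t)) \<le> 1" if "k > 0" "t \<ge> 0" for k t :: real
    using that by simp
  have stab: "lyapunov_stable (ctrl_field \<alpha>) (E_plus \<alpha>)"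
    unfolding lyapunov_stable_def
  proof (intro allI impI)
    fix \<epsilon> :: real assume e: "\<epsilon> > 0"
    define \<delta> where "\<delta> = min 1 (\<epsilon> / (6 + 2*X))"
    have \<delta>0: "\<delta> > 0" unfolding \<delta>_def using e X0 by simp
    show "\<exists>\<delta>>0. \<forall>\<phi>. is_solution (ctrl_field \<alpha>) \<phi> \<and> dist (\<phi> 0) (E_plus \<alpha>) < \<delta> \<longrightarrow>
              (\<forall>t\<ge>0. dist (\<phi> t) (E_plus \<alpha>) < \<epsilon>)"
    proof (intro exI[of _ \<delta>] conjI allI impI \<delta>0)
      fix \<phi> :: "real \<Rightarrow> real \<times> real \<times> real" and t :: real
      assume H: "is_solution (ctrl_field \<alpha>) \<phi> \<and> dist (\<phi> 0) (E_plus \<alpha>) < \<delta>" and t: "t \<ge> 0"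
      define d where "d = dist (\<phi> 0) (E_plus \<alpha>)"
      have dd: "d < \<delta>" using H d_def by simp
      have d0: "d \<ge> 0" unfolding d_def by simp
      have dl1: "d \<le> 1" using dd unfolding \<delta>_def by simp
      have dle: "d < \<epsilon> / (6 + 2*X)" using dd unfolding \<delta>_def by simp
      define m where "m = \<bar>fst (\<phi> 0) - X\<bar> + \<bar>fst (snd (\<phi> 0)) - X\<bar>"
      have u0: "\<bar>fst (\<phi> 0) - X\<bar> \<le> d" and v0: "\<bar>fst (snd (\<phi> 0)) - X\<bar> \<le> d"
        and w0: "\<bar>snd (snd (\<phi> 0)) - X^2/b\<bar> \<le> d"
        unfolding d_def by (rule d1, rule d2, rule d3)
      have m0: "m \<ge> 0" and m2: "m \<le> 2*d" unfolding m_def using u0 v0 by auto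
      note S = sol_bounds[OF assms conjunct1[OF H] t X_def s_def b_def m_def]
      have A: "\<bar>fst (\<phi> t) - X\<bar> \<le> m"
        using S(2) mult_left_mono[OF expl1[of "s/2" t] m0] s0 t by simp
      have Bv: "\<bar>fst (snd (\<phi> t)) - X\<bar> \<le> d"
        using S(1) mult_left_mono[OF expl1[of s t], of "\<bar>fst (snd (\<phi> 0)) - X\<bar>"] s0 t v0 by simp
      have K0: "0 \<le> \<bar>snd (snd (\<phi> 0)) - X^2/b\<bar> + (2*X*m + m^2)/2" using X0 m0 by simp
      have C: "\<bar>snd (snd (\<phi> t)) - X^2/b\<bar> \<le> \<bar>snd (snd (\<phi> 0)) - X^2/b\<bar> + (2*X*m + m^2)/2"
        using S(3) mult_left_mono[OF expl1[of b t] K0] b0 t by simp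
      have Xm: "X*m \<le> X*(2*d)" using X0 m2 by (intro mult_left_mono) auto
      have mm: "m^2 \<le> 4*d"
      proof -
        have "m^2 \<le> (2*d)^2" using m0 m2 by (intro power_mono) auto
        also have "\<dots> = 4*(d*d)" by (simp add: power2_eq_square)
        also have "\<dots> \<le> 4*d" using d0 dl1 by (simp add: mult_left_le_one_le)
        finally show ?thesis .
      qed
      have Xm': "X*m \<le> 2*(X*d)" using Xm by simp
      have KK: "(2*X*m + m^2)/2 = X*m + m^2/2" by (simp add: algebra_simps)
      have "dist (\<phi> t) (E_plus \<alpha>) \<le> 6*d + 2*(X*d)"
        using distle[of \<phi> t] A Bv C w0 Xm' mm m2 KK by linarith
      also have "\<dots> = (6 + 2*X) * d" by (simp add: algebra_simps)
      also have "\<dots> < \<epsilon>" using dle X0 by (simp add: less_divide_eq mult.commute)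
      finally show "dist (\<phi> t) (E_plus \<alpha>) < \<epsilon>" .
    qed
  qed
  have att: "globally_attractive (ctrl_field \<alpha>) (E_plus \<alpha>)"
    unfolding globally_attractive_def
  proof (intro allI impI)
    fix \<phi> :: "real \<Rightarrow> real \<times> real \<times> real"
    assume sol: "is_solution (ctrl_field \<alpha>) \<phi>"
    define m where "m = \<bar>fst (\<phi> 0) - X\<bar> + \<bar>fst (snd (\<phi> 0)) - X\<bar>"
    note S = sol_bounds[OF assms sol _ X_def s_def b_def m_def]
    have b2: "b > 0" "s/2 > 0" using b0 s0 by auto
    have ev: "eventually (\<lambda>t::real. t \<ge> 0) at_top" by (rule eventually_ge_at_top)
    have g1: "((\<lambda>t. \<bar>fst (snd (\<phi> 0)) - X\<bar> * exp (-(s*t))) \<longlongrightarrow> 0) at_top"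
      using tendsto_mult[OF tendsto_const tend_exp0[OF s0], of "\<bar>fst (snd (\<phi> 0)) - X\<bar>"] by simp
    have g2: "((\<lambda>t. m * exp (-(s/2*t))) \<longlongrightarrow> 0) at_top"
      using tendsto_mult[OF tendsto_const tend_exp0[OF b2(2)], of m] by simp
    have g3: "((\<lambda>t. (\<bar>snd (snd (\<phi> 0)) - X^2/b\<bar> + (2*X*m + m^2)/2) * exp (-(b*t))) \<longlongrightarrow> 0) at_top"
      using tendsto_mult[OF tendsto_const tend_exp0[OF b2(1)], of "\<bar>snd (snd (\<phi> 0)) - X^2/b\<bar> + (2*X*m + m^2)/2"] by simp
    have e1: "eventually (\<lambda>t. norm (fst (snd (\<phi> t)) - X) \<le> \<bar>fst (snd (\<phi> 0)) - X\<bar> * exp (-(s*t))) at_top"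
      using ev by (rule eventually_mono) (unfold real_norm_def, rule S(1))
    have e2: "eventually (\<lambda>t. norm (fst (\<phi> t) - X) \<le> m * exp (-(s/2*t))) at_top"
      using ev by (rule eventually_mono) (unfold real_norm_def, rule S(2))
    have e3: "eventually (\<lambda>t. norm (snd (snd (\<phi> t)) - X^2/b) \<le> (\<bar>snd (snd (\<phi> 0)) - X^2/b\<bar> + (2*X*m + m^2)/2) * exp (-(b*t))) at_top"
      using ev by (rule eventually_mono) (unfold real_norm_def, rule S(3))
    have lx: "((\<lambda>t. fst (\<phi> t) - X) \<longlongrightarrow> 0) at_top" by (rule Lim_null_comparison[OF e2 g2])
    have ly: "((\<lambda>t. fst (snd (\<phi> t)) - X) \<longlongrightarrow> 0) at_top" by (rule Lim_null_comparison[OF e1 g1])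
    have lz: "((\<lambda>t. snd (snd (\<phi> t)) - X^2/b) \<longlongrightarrow> 0) at_top" by (rule Lim_null_comparison[OF e3 g3])
    have "((\<lambda>t. (fst (\<phi> t), fst (snd (\<phi> t)), snd (snd (\<phi> t)))) \<longlongrightarrow> (X, X, X^2/b)) at_top"
      by (rule tendsto_Pair[OF LIM_zero_cancel[OF lx] tendsto_Pair[OF LIM_zero_cancel[OF ly] LIM_zero_cancel[OF lz]]])
    thus "(\<phi> \<longlongrightarrow> E_plus \<alpha>) at_top" unfolding E by simp
  qed
  show ?thesis unfolding globally_asymptotically_stable_def using eq stab att by blast
qed

end
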